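(* Consider a (non-relational) refinement type system with judgments $\vdash e : T$ over types built from $\mathbb{N}$, function types $T\to U$ and refinements $\{x:T\mid\phi\}$, containing: (i) an application rule (from $\vdash e_1 : T\to U$ and $\vdash e_2:T$ infer $\vdash e_1\,e_2 : U$) and the typing $\vdash 0:\mathbb{N}$; (ii) a subsumption rule (from $\vdash e:T$ and $T\preceq U$ infer $\vdash e:U$); (iii) the subtyping equivalences $\{x:T\mid\phi\}\to\{y:U\mid\psi\}\simeq\{f:T\to U\mid \forall x:T.\ \phi\Rightarrow\psi[f\,x/y]\}$ and $T\simeq\{x:T\mid\top\}$, where $\simeq$ means subtyping in both directions; (iv) the rule of consequence $\{x:T\mid\phi\}\preceq\{x:T\mid\phi'\}$ whenever $\phi\Rightarrow\phi'$ is valid. Let $g$ be the recursive function $\mathtt{letrec}\ g\ x = \mathtt{case}\ x\ \mathtt{of}\ [0\Rightarrow 0 \mid s\,y \Rightarrow g\,x]$. Then: $g\,0$ evaluates to the value $0$; $g\,n$ diverges for every $n\neq 0$ (so $g$ satisfies the partial-correctness specification $\{x:\mathbb{N}\mid x\neq 0\}\to\{y:\mathbb{N}\mid\bot\}$); and if the system derives $\vdash g : \{x:\mathbb{N}\mid x\neq 0\}\to\{y:\mathbb{N}\mid\bot\}$, then it also derives $\vdash g\,0 : \{x:\mathbb{N}\mid\bot\}$, although $g\,0$ reduces to a value and no value satisfies $\bot$. Hence a logical (partial-correctness) interpretation of non-termination is inconsistent with semantic subtyping in the presence of refinements at higher types.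
   Context: In a refinement type $\{x:T\mid\phi\}$, $\phi$ is a logical formula constraining $x$; $\bot$ is falsity and $\top$ truth. $\psi[f\,x/y]$ denotes substitution of $f\,x$ for $y$ in $\psi$. A type system is consistent in the intended sense if whenever $\vdash e:\{x:\mathbb{N}\mid\phi\}$ and $e$ reduces to a value $v$, then $\phi[v/x]$ holds. *)

theory Defs
  imports Main
begin

type_synonym var = string

datatype exp =
    Var var
  | Zero
  | Succ exp
  | App exp exp
  | Lam var exp
  | Rec var var exp          (* Rec f x e  =  letrec f x = e  (a recursive function value) *)
  | Case exp exp var exp     (* Case e e0 y es  =  case e of [0 => e0 | s y => es] *)

fun is_val :: "exp \<Rightarrow> bool" where
  "is_val Zero = True"
| "is_val (Succ e) = is_val e"
| "is_val (Lam x e) = True"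
| "is_val (Rec f x e) = True"
| "is_val _ = False"

text \<open>Single-variable substitution (non capture-avoiding; used on closed values in evaluation).\<close>
primrec subst :: "var \<Rightarrow> exp \<Rightarrow> exp \<Rightarrow> exp" where
  "subst x v (Var y) = (if x = y then v else Var y)"
| "subst x v Zero = Zero"
| "subst x v (Succ e) = Succ (subst x v e)"
| "subst x v (App e1 e2) = App (subst x v e1) (subst x v e2)"
| "subst x v (Lam y e) = (if x = y then Lam y e else Lam y (subst x v e))"
| "subst x v (Rec f y e) = (if x = f \<or> x = y then Rec f y e else Rec f y (subst x v e))"
| "subst x v (Case e e0 y es) =
     Case (subst x v e) (subst x v e0) y (if x = y then es else subst x v es)"

primrec psubst :: "(var \<Rightarrow> exp) \<Rightarrow> exp \<Rightarrow> exp" where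
  "psubst \<rho> (Var y) = \<rho> y"
| "psubst \<rho> Zero = Zero"
| "psubst \<rho> (Succ e) = Succ (psubst \<rho> e)"
| "psubst \<rho> (App e1 e2) = App (psubst \<rho> e1) (psubst \<rho> e2)"
| "psubst \<rho> (Lam y e) = Lam y (psubst (\<rho>(y := Var y)) e)"
| "psubst \<rho> (Rec f y e) = Rec f y (psubst (\<rho>(f := Var f, y := Var y)) e)"
| "psubst \<rho> (Case e e0 y es) = Case (psubst \<rho> e) (psubst \<rho> e0) y (psubst (\<rho>(y := Var y)) es)"

primrec fv_exp :: "exp \<Rightarrow> var set" where
  "fv_exp (Var y) = {y}"
| "fv_exp Zero = {}"
| "fv_exp (Succ e) = fv_exp e"
| "fv_exp (App e1 e2) = fv_exp e1 \<union> fv_exp e2"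
| "fv_exp (Lam y e) = fv_exp e - {y}"
| "fv_exp (Rec f y e) = fv_exp e - {f, y}"
| "fv_exp (Case e e0 y es) = fv_exp e \<union> fv_exp e0 \<union> (fv_exp es - {y})"

inductive step :: "exp \<Rightarrow> exp \<Rightarrow> bool" where
  beta_lam: "is_val v \<Longrightarrow> step (App (Lam x e) v) (subst x v e)"
| beta_rec: "is_val v \<Longrightarrow> step (App (Rec f x e) v) (subst f (Rec f x e) (subst x v e))"
| case_zero: "step (Case Zero e0 y es) e0"
| case_succ: "is_val v \<Longrightarrow> step (Case (Succ v) e0 y es) (subst y v es)"
| app_l: "step e1 e1' \<Longrightarrow> step (App e1 e2) (App e1' e2)"
| app_r: "is_val v \<Longrightarrow> step e2 e2' \<Longrightarrow> step (App v e2) (App v e2')"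
| succ_c: "step e e' \<Longrightarrow> step (Succ e) (Succ e')"
| case_c: "step e e' \<Longrightarrow> step (Case e e0 y es) (Case e' e0 y es)"

abbreviation steps :: "exp \<Rightarrow> exp \<Rightarrow> bool" where
  "steps \<equiv> step\<^sup>*\<^sup>*"

definition evals :: "exp \<Rightarrow> exp \<Rightarrow> bool" where
  "evals e v \<longleftrightarrow> steps e v \<and> is_val v"

definition diverges :: "exp \<Rightarrow> bool" where
  "diverges e \<longleftrightarrow> (\<forall>e'. steps e e' \<longrightarrow> (\<exists>e''. step e' e''))"

definition num :: "nat \<Rightarrow> exp" where
  "num n = (Succ ^^ n) Zero"

datatype ty =
    TNat
  | TArr ty ty
  | TRef var ty form          (* TRef x T phi  =  {x:T | phi} *)
and form =
    FTop
  | FBot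
  | FNot form
  | FImp form form
  | FAll var ty form
  | FEq exp exp

primrec fv_ty :: "ty \<Rightarrow> var set" and fv_form :: "form \<Rightarrow> var set" where
  "fv_ty TNat = {}"
| "fv_ty (TArr T U) = fv_ty T \<union> fv_ty U"
| "fv_ty (TRef x T \<phi>) = fv_ty T \<union> (fv_form \<phi> - {x})"
| "fv_form FTop = {}"
| "fv_form FBot = {}"
| "fv_form (FNot \<phi>) = fv_form \<phi>"
| "fv_form (FImp \<phi> \<psi>) = fv_form \<phi> \<union> fv_form \<psi>"
| "fv_form (FAll x T \<phi>) = fv_ty T \<union> (fv_form \<phi> - {x})"
| "fv_form (FEq e1 e2) = fv_exp e1 \<union> fv_exp e2"

primrec tsubst :: "var \<Rightarrow> exp \<Rightarrow> ty \<Rightarrow> ty" and fsubst :: "var \<Rightarrow> exp \<Rightarrow> form \<Rightarrow> form" where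
  "tsubst y e TNat = TNat"
| "tsubst y e (TArr T U) = TArr (tsubst y e T) (tsubst y e U)"
| "tsubst y e (TRef x T \<phi>) = TRef x (tsubst y e T) (if x = y then \<phi> else fsubst y e \<phi>)"
| "fsubst y e FTop = FTop"
| "fsubst y e FBot = FBot"
| "fsubst y e (FNot \<phi>) = FNot (fsubst y e \<phi>)"
| "fsubst y e (FImp \<phi> \<psi>) = FImp (fsubst y e \<phi>) (fsubst y e \<psi>)"
| "fsubst y e (FAll x T \<phi>) = FAll x (tsubst y e T) (if x = y then \<phi> else fsubst y e \<phi>)"
| "fsubst y e (FEq e1 e2) = FEq (subst y e e1) (subst y e e2)"

text \<open>Semantics: types denote sets of values (partial-correctness reading of arrows);
  an equation holds when both sides evaluate to the same value.\<close>
primrec tsem :: "(var \<Rightarrow> exp) \<Rightarrow> ty \<Rightarrow> exp \<Rightarrow> bool"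
  and fsem :: "(var \<Rightarrow> exp) \<Rightarrow> form \<Rightarrow> bool" where
  "tsem \<rho> TNat v = (\<exists>n. v = num n)"
| "tsem \<rho> (TArr T U) v = (is_val v \<and> (\<forall>a. tsem \<rho> T a \<longrightarrow>
       (diverges (App v a) \<or> (\<exists>w. evals (App v a) w \<and> tsem \<rho> U w))))"
| "tsem \<rho> (TRef x T \<phi>) v = (tsem \<rho> T v \<and> fsem (\<rho>(x := v)) \<phi>)"
| "fsem \<rho> FTop = True"
| "fsem \<rho> FBot = False"
| "fsem \<rho> (FNot \<phi>) = (\<not> fsem \<rho> \<phi>)"
| "fsem \<rho> (FImp \<phi> \<psi>) = (fsem \<rho> \<phi> \<longrightarrow> fsem \<rho> \<psi>)"
| "fsem \<rho> (FAll x T \<phi>) = (\<forall>v. tsem \<rho> T v \<longrightarrow> fsem (\<rho>(x := v)) \<phi>)"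
| "fsem \<rho> (FEq e1 e2) = (\<exists>v. evals (psubst \<rho> e1) v \<and> evals (psubst \<rho> e2) v)"

definition valid :: "form \<Rightarrow> bool" where
  "valid \<phi> \<longleftrightarrow> (\<forall>\<rho>. fsem \<rho> \<phi>)"

text \<open>A typing judgement \<open>HT e T\<close> (\<open>\<turnstile> e : T\<close>) together with a subtyping relation
  \<open>Sub T U\<close> (\<open>T \<preceq> U\<close>) containing the rules (i)--(iv).\<close>
definition contains_rules :: "(exp \<Rightarrow> ty \<Rightarrow> bool) \<Rightarrow> (ty \<Rightarrow> ty \<Rightarrow> bool) \<Rightarrow> bool" where
  "contains_rules HT Sub \<longleftrightarrow>
     (\<forall>e1 e2 T U. HT e1 (TArr T U) \<longrightarrow> HT e2 T \<longrightarrow> HT (App e1 e2) U)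
   \<and> HT Zero TNat
   \<and> (\<forall>e T U. HT e T \<longrightarrow> Sub T U \<longrightarrow> HT e U)
   \<and> (\<forall>x y f T U \<phi> \<psi>. f \<noteq> x \<and> f \<noteq> y \<and> f \<notin> fv_form \<phi> \<and> f \<notin> fv_form \<psi> \<longrightarrow>
        (let A = TArr (TRef x T \<phi>) (TRef y U \<psi>);
             B = TRef f (TArr T U) (FAll x T (FImp \<phi> (fsubst y (App (Var f) (Var x)) \<psi>)))
         in Sub A B \<and> Sub B A))
   \<and> (\<forall>x T. Sub T (TRef x T FTop) \<and> Sub (TRef x T FTop) T)
   \<and> (\<forall>x T \<phi> \<phi>'. valid (FImp \<phi> \<phi>') \<longrightarrow> Sub (TRef x T \<phi>) (TRef x T \<phi>'))"

definition consistent :: "(exp \<Rightarrow> ty \<Rightarrow> bool) \<Rightarrow> bool" where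
  "consistent HT \<longleftrightarrow>
     (\<forall>e x \<phi> v. HT e (TRef x TNat \<phi>) \<longrightarrow> evals e v \<longrightarrow> (\<forall>\<rho>. fsem (\<rho>(x := v)) \<phi>))"

definition g :: exp where
  "g = Rec ''g'' ''x'' (Case (Var ''x'') Zero ''y'' (App (Var ''g'') (Var ''x'')))"

definition spec :: ty where
  "spec = TArr (TRef ''x'' TNat (FNot (FEq (Var ''x'') Zero))) (TRef ''y'' TNat FBot)"

end

theory Submission
  imports Defs
begin

lemma val_nostep: "is_val v \<Longrightarrow> \<not> step v e"
proof (induction v arbitrary: e)
  case (Succ v)
  then show ?case by (auto elim: step.cases)
qed (auto elim: step.cases)

lemma val_steps: "steps v w \<Longrightarrow> is_val v \<Longrightarrow> w = v"
  by (induction rule: converse_rtranclp_induct) (auto dest: val_nostep)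

lemma num_val: "is_val (num n)"
  by (induction n) (auto simp: num_def)

lemma subst_g[simp]: "subst ''y'' v g = g"
  by (simp add: g_def)

lemma subst_num[simp]: "subst x e (num m) = num m"
  by (induction m) (auto simp: num_def)

lemma g_div:
  assumes v: "is_val v" and vn: "v = num m"
  shows "diverges (App g (Succ v))"
proof -
  define A where "A = App g (Succ v)"
  define C where "C = Case (Succ v) Zero ''y'' (App g (Succ v))"
  have n1: "\<not> step (Succ (num m)) e" for e using val_nostep[of "Succ (num m)"] num_val by simp
  have n2: "\<not> step (Rec f x b) e" for f x b e using val_nostep[of "Rec f x b"] by simp
  have sA: "step A e \<Longrightarrow> e = C" for e
    unfolding A_def C_def g_def
    by (erule step.cases) (auto simp: v vn n1 n2)
  have sC: "step C e \<Longrightarrow> e = A" for e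
    unfolding A_def C_def
    by (erule step.cases) (auto simp: v vn g_def n1)
  have AC: "step A C" unfolding A_def C_def g_def using v vn
    using beta_rec[of "Succ v" "''g''" "''x''" "Case (Var ''x'') Zero ''y'' (App (Var ''g'') (Var ''x''))"]
    by simp
  have CA: "step C A" unfolding A_def C_def using v case_succ[of v Zero "''y''" "App g (Succ v)"]
    by (simp add: vn)
  have "steps A e' \<Longrightarrow> e' = A \<or> e' = C" for e'
    by (induction rule: rtranclp_induct) (auto dest: sA sC)
  then show ?thesis unfolding diverges_def A_def[symmetric] using AC CA by blast
qed

lemma g0: "evals (App g Zero) Zero"
proof -
  have "step (App g Zero) (Case Zero Zero ''y'' (App g Zero))"
    unfolding g_def
    using beta_rec[of Zero "''g''" "''x''" "Case (Var ''x'') Zero ''y'' (App (Var ''g'') (Var ''x''))"]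
    by simp
  moreover have "step (Case Zero Zero ''y'' (App g Zero)) Zero" by (rule case_zero)
  ultimately show ?thesis unfolding evals_def by auto
qed

lemma evals_Zero: "evals Zero w \<Longrightarrow> w = Zero"
  unfolding evals_def using val_steps by auto

lemma evals_val: "evals v w \<Longrightarrow> is_val v \<Longrightarrow> w = v"
  unfolding evals_def using val_steps by auto

theorem mainTheorem2:
  fixes HT :: "exp \<Rightarrow> ty \<Rightarrow> bool" and Sub :: "ty \<Rightarrow> ty \<Rightarrow> bool"
  assumes "contains_rules HT Sub"
  shows "evals (App g Zero) Zero
    \<and> (\<forall>n. n \<noteq> 0 \<longrightarrow> diverges (App g (num n)))
    \<and> (\<forall>\<rho>. tsem \<rho> spec g)
    \<and> (HT g spec \<longrightarrow>
         HT (App g Zero) (TRef ''x'' TNat FBot)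
       \<and> (\<forall>\<rho> v. \<not> tsem \<rho> (TRef ''x'' TNat FBot) v)
       \<and> \<not> consistent HT)"
proof -
  have app: "\<And>e1 e2 T U. HT e1 (TArr T U) \<Longrightarrow> HT e2 T \<Longrightarrow> HT (App e1 e2) U"
    and z: "HT Zero TNat"
    and sub: "\<And>e T U. HT e T \<Longrightarrow> Sub T U \<Longrightarrow> HT e U"
    and arr: "\<And>x y f T U \<phi> \<psi>. f \<noteq> x \<Longrightarrow> f \<noteq> y \<Longrightarrow> f \<notin> fv_form \<phi> \<Longrightarrow> f \<notin> fv_form \<psi> \<Longrightarrow>
        Sub (TArr (TRef x T \<phi>) (TRef y U \<psi>)) (TRef f (TArr T U) (FAll x T (FImp \<phi> (fsubst y (App (Var f) (Var x)) \<psi>))))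
      \<and> Sub (TRef f (TArr T U) (FAll x T (FImp \<phi> (fsubst y (App (Var f) (Var x)) \<psi>)))) (TArr (TRef x T \<phi>) (TRef y U \<psi>))"
    and top: "\<And>x T. Sub T (TRef x T FTop)"
    and cons: "\<And>x T \<phi> \<phi>'. valid (FImp \<phi> \<phi>') \<Longrightarrow> Sub (TRef x T \<phi>) (TRef x T \<phi>')"
    using assms unfolding contains_rules_def Let_def by blast+
  have div: "\<forall>n. n \<noteq> 0 \<longrightarrow> diverges (App g (num n))"
  proof (intro allI impI)
    fix n :: nat assume "n \<noteq> 0"
    then obtain m where "n = Suc m" by (cases n) auto
    then have "num n = Succ (num m)" by (simp add: num_def)
    then show "diverges (App g (num n))" using g_div[OF num_val refl] by simp
  qed
  have sem: "\<forall>\<rho>. tsem \<rho> spec g"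
  proof
    fix \<rho>
    show "tsem \<rho> spec g"
      unfolding spec_def
    proof (simp, intro conjI allI impI)
      show "is_val g" by (simp add: g_def)
    next
      fix a
      assume h: "(\<exists>n. a = num n) \<and> (\<forall>v. evals a v \<longrightarrow> \<not> evals Zero v)"
      then obtain n where an: "a = num n" by blast
      have "n \<noteq> 0"
      proof
        assume "n = 0"
        then have "a = Zero" using an by (simp add: num_def)
        then show False using h by (auto simp add: evals_def)
      qed
      then show "diverges (App g a)" using div an by blast
    qed
  qed
  have bot: "\<forall>\<rho> v. \<not> tsem \<rho> (TRef ''x'' TNat FBot) v" by simp
  have typing: "HT g spec \<Longrightarrow> HT (App g Zero) (TRef ''x'' TNat FBot)"
  proof -
    assume H: "HT g spec"
    let ?\<phi> = "FNot (FEq (Var ''x'') Zero)"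
    have s1: "Sub spec (TRef ''f'' (TArr TNat TNat) (FAll ''x'' TNat (FImp ?\<phi> FBot)))"
      using arr[of "''f''" "''x''" "''y''" ?\<phi> FBot TNat TNat] unfolding spec_def by simp
    have v: "valid (FImp (FAll ''x'' TNat (FImp ?\<phi> FBot)) (FAll ''x'' TNat (FImp FTop FBot)))"
      unfolding valid_def
    proof (intro allI)
      fix \<rho> :: "var \<Rightarrow> exp"
      { assume "\<forall>v. (\<exists>n. v = num n) \<longrightarrow> (\<exists>va. evals v va \<and> evals Zero va)"
      then obtain w where "evals (num 1) w" "evals Zero w" by blast
      then have "w = num 1" "w = Zero" using evals_val num_val evals_Zero by blast+
      then have False by (simp add: num_def) }
      then show "fsem \<rho> (FImp (FAll ''x'' TNat (FImp ?\<phi> FBot)) (FAll ''x'' TNat (FImp FTop FBot)))"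
        by auto
    qed
    have s2: "Sub (TRef ''f'' (TArr TNat TNat) (FAll ''x'' TNat (FImp ?\<phi> FBot)))
                  (TRef ''f'' (TArr TNat TNat) (FAll ''x'' TNat (FImp FTop FBot)))"
      using cons[OF v] .
    have s3: "Sub (TRef ''f'' (TArr TNat TNat) (FAll ''x'' TNat (FImp FTop FBot)))
                  (TArr (TRef ''x'' TNat FTop) (TRef ''x'' TNat FBot))"
      using arr[of "''f''" "''x''" "''x''" FTop FBot TNat TNat] by simp
    have "HT g (TArr (TRef ''x'' TNat FTop) (TRef ''x'' TNat FBot))"
      using sub[OF sub[OF sub[OF H s1] s2] s3] .
    moreover have "HT Zero (TRef ''x'' TNat FTop)" using sub[OF z top] .
    ultimately show ?thesis by (rule app)
  qed
  have "HT g spec \<longrightarrow> \<not> consistent HT"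
  proof
    assume "HT g spec"
    then have "HT (App g Zero) (TRef ''x'' TNat FBot)" by (rule typing)
    then show "\<not> consistent HT" unfolding consistent_def using g0 by fastforce
  qed
  then show ?thesis using g0 div sem bot typing by blast
qed

end
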